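(* Let $n>1$ and let $(G,\sigma)$ be a vertex-colored graph with $V=V(G)$. Let $G+x$ be obtained by adding a new vertex $x\notin V$ adjacent to all vertices of $V$, and let $\sigma'$ be the coloring of $V\cup\{x\}$ with $\sigma'(v)=\sigma(v)$ for $v\in V$ and $\sigma'(x)\neq\sigma(v)$ for all $v\in V$. Then $(G,\sigma)$ is an $(n-1)$-RBMG if and only if $(G+x,\sigma')$ is an $n$-RBMG.
   Context: All graphs are finite, simple and undirected. A vertex coloring is a surjective map $\sigma:V\to S$; properly colored means adjacent vertices get distinct colors. A phylogenetic tree $T$ on $L$ is a rooted tree with leaf set $L$ whose inner vertices other than the root have degree at least three; $u\preceq_T v$ means $v$ lies on the root-to-$u$ path; $\mathrm{lca}_T$ is last common ancestor. For surjective $\sigma:L\to S$, $y$ is a best match of $x$ if $\sigma(x)\neq\sigma(y)$ and $\mathrm{lca}_T(x,y)\preceq_T\mathrm{lca}_T(x,y')$ for all $y'$ with $\sigma(y')=\sigma(y)$; $G(T,\sigma)$ is the graph on $L$ whose edges are the reciprocal best match pairs. A properly colored $(G,\sigma)$ is an RBMG if $G(T,\sigma)=(G,\sigma)$ for some leaf-colored phylogenetic tree $(T,\sigma)$; it is an $n$-RBMG if moreover exactly $n$ colors are used. *)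

theory Defs
  imports Main
begin

definition simple_graph :: "'a set \<Rightarrow> ('a \<times> 'a) set \<Rightarrow> bool" where
  "simple_graph V E \<longleftrightarrow> finite V \<and> E \<subseteq> V \<times> V \<and> sym E \<and> irrefl E"

definition properly_colored :: "'a set \<Rightarrow> ('a \<times> 'a) set \<Rightarrow> ('a \<Rightarrow> 'c) \<Rightarrow> bool" where
  "properly_colored V E \<sigma> \<longleftrightarrow> (\<forall>u v. (u, v) \<in> E \<longrightarrow> \<sigma> u \<noteq> \<sigma> v)"

definition rooted_tree :: "'v set \<Rightarrow> ('v \<times> 'v) set \<Rightarrow> 'v \<Rightarrow> bool" where
  "rooted_tree VT ET \<rho> \<longleftrightarrow> finite VT \<and> \<rho> \<in> VT \<and> ET \<subseteq> VT \<times> VT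
     \<and> (\<forall>p. (p, \<rho>) \<notin> ET)
     \<and> (\<forall>v\<in>VT. v \<noteq> \<rho> \<longrightarrow> (\<exists>!p. (p, v) \<in> ET))
     \<and> (\<forall>v\<in>VT. (\<rho>, v) \<in> ET\<^sup>*)"

definition children :: "('v \<times> 'v) set \<Rightarrow> 'v \<Rightarrow> 'v set" where
  "children ET v = {w. (v, w) \<in> ET}"

definition leaves :: "'v set \<Rightarrow> ('v \<times> 'v) set \<Rightarrow> 'v set" where
  "leaves VT ET = {v \<in> VT. children ET v = {}}"

text \<open>Degree in the underlying undirected tree.\<close>
definition tdeg :: "('v \<times> 'v) set \<Rightarrow> 'v \<Rightarrow> 'v \<Rightarrow> nat" where
  "tdeg ET \<rho> v = card (children ET v) + (if v = \<rho> then 0 else 1)"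

definition phylo_tree :: "'v set \<Rightarrow> ('v \<times> 'v) set \<Rightarrow> 'v \<Rightarrow> 'v set \<Rightarrow> bool" where
  "phylo_tree VT ET \<rho> L \<longleftrightarrow> rooted_tree VT ET \<rho> \<and> leaves VT ET = L
     \<and> (\<forall>v\<in>VT. v \<notin> L \<and> v \<noteq> \<rho> \<longrightarrow> tdeg ET \<rho> v \<ge> 3)"

definition anc_le :: "('v \<times> 'v) set \<Rightarrow> 'v \<Rightarrow> 'v \<Rightarrow> bool" where
  "anc_le ET u v \<longleftrightarrow> (v, u) \<in> ET\<^sup>*"

definition lca :: "'v set \<Rightarrow> ('v \<times> 'v) set \<Rightarrow> 'v \<Rightarrow> 'v \<Rightarrow> 'v" where
  "lca VT ET x y = (THE w. w \<in> VT \<and> anc_le ET x w \<and> anc_le ET y w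
       \<and> (\<forall>w'\<in>VT. anc_le ET x w' \<and> anc_le ET y w' \<longrightarrow> anc_le ET w w'))"

definition best_match :: "'v set \<Rightarrow> ('v \<times> 'v) set \<Rightarrow> 'v set \<Rightarrow> ('v \<Rightarrow> 'c) \<Rightarrow> 'v \<Rightarrow> 'v \<Rightarrow> bool" where
  "best_match VT ET L \<tau> x y \<longleftrightarrow> x \<in> L \<and> y \<in> L \<and> \<tau> x \<noteq> \<tau> y
     \<and> (\<forall>y'\<in>L. \<tau> y' = \<tau> y \<longrightarrow> anc_le ET (lca VT ET x y) (lca VT ET x y'))"

definition reciprocal_best_match :: "'v set \<Rightarrow> ('v \<times> 'v) set \<Rightarrow> 'v set \<Rightarrow> ('v \<Rightarrow> 'c) \<Rightarrow> 'v \<Rightarrow> 'v \<Rightarrow> bool" where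
  "reciprocal_best_match VT ET L \<tau> x y \<longleftrightarrow> best_match VT ET L \<tau> x y \<and> best_match VT ET L \<tau> y x"

text \<open>Trees explaining a graph on vertex set V (of type 'a) have vertex type 'a + nat:
  the leaves are the copies Inl v of the graph vertices, the inner vertices are Inr k.
  Since trees are finite, every leaf-labelled tree on V is isomorphic to such a tree.\<close>
definition RBMG :: "'a set \<Rightarrow> ('a \<times> 'a) set \<Rightarrow> ('a \<Rightarrow> 'c) \<Rightarrow> bool" where
  "RBMG V E \<sigma> \<longleftrightarrow> simple_graph V E \<and> properly_colored V E \<sigma> \<and>
     (\<exists>(VT :: ('a + nat) set) ET \<rho>. phylo_tree VT ET \<rho> (Inl ` V) \<and>
        (\<forall>u\<in>V. \<forall>v\<in>V. (u, v) \<in> E \<longleftrightarrow>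
            reciprocal_best_match VT ET (Inl ` V) (case_sum \<sigma> (\<lambda>_. undefined)) (Inl u) (Inl v)))"

definition n_RBMG :: "nat \<Rightarrow> 'a set \<Rightarrow> ('a \<times> 'a) set \<Rightarrow> ('a \<Rightarrow> 'c) \<Rightarrow> bool" where
  "n_RBMG n V E \<sigma> \<longleftrightarrow> RBMG V E \<sigma> \<and> card (\<sigma> ` V) = n"

end

theory Submission
  imports Defs
begin
locale rtree =
  fixes VT :: "'v set" and ET :: "('v \<times> 'v) set" and \<rho> :: 'v
  assumes rt: "rooted_tree VT ET \<rho>"
begin

lemma fin: "finite VT" and root_in: "\<rho> \<in> VT" and sub: "ET \<subseteq> VT \<times> VT"
  and noparent: "(p, \<rho>) \<notin> ET"
  and parent_ex: "v \<in> VT \<Longrightarrow> v \<noteq> \<rho> \<Longrightarrow> \<exists>p. (p, v) \<in> ET"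
  and reach: "v \<in> VT \<Longrightarrow> (\<rho>, v) \<in> ET\<^sup>*"
  using rt unfolding rooted_tree_def by blast+

lemma edge_in: "(a, b) \<in> ET \<Longrightarrow> a \<in> VT \<and> b \<in> VT"
  using sub by blast

lemma parent_unique: "(p, v) \<in> ET \<Longrightarrow> (p', v) \<in> ET \<Longrightarrow> p = p'"
proof -
  assume a: "(p, v) \<in> ET" "(p', v) \<in> ET"
  then have "v \<in> VT" "v \<noteq> \<rho>" using edge_in noparent by blast+
  then have "\<exists>!p. (p, v) \<in> ET" using rt unfolding rooted_tree_def by blast
  then show ?thesis using a by blast
qed

lemma rtrancl_in: "(a, b) \<in> ET\<^sup>* \<Longrightarrow> a \<in> VT \<Longrightarrow> b \<in> VT"
  by (induction rule: rtrancl_induct) (auto dest: edge_in)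

lemma acyclic: "(v, v) \<notin> ET\<^sup>+"
proof
  assume c: "(v, v) \<in> ET\<^sup>+"
  then have "v \<in> VT" using edge_in by (metis trancl.cases)
  then have "(\<rho>, v) \<in> ET\<^sup>*" by (rule reach)
  then show False using c
  proof (induction arbitrary: rule: rtrancl_induct)
    case base
    then show ?case using noparent by (metis tranclE)
  next
    case (step u v)
    from step.prems show ?case
    proof (cases rule: tranclE)
      case base
      then show ?thesis using parent_unique step.hyps(2) step.IH by blast
    next
      case (step c)
      then have "c = u" using parent_unique \<open>(u, v) \<in> ET\<close> by blast
      then have "(u, u) \<in> ET\<^sup>+" using step \<open>(u, v) \<in> ET\<close>
        by (meson trancl.trancl_into_trancl trancl_into_trancl2)
      then show ?thesis using step.IH by blast
    qed
  qed
qed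

lemma antisym: "(a, b) \<in> ET\<^sup>* \<Longrightarrow> (b, a) \<in> ET\<^sup>* \<Longrightarrow> a = b"
  by (metis acyclic rtrancl_eq_or_trancl rtrancl_trancl_trancl)

lemma chain: "(w, a) \<in> ET\<^sup>* \<Longrightarrow> (u, a) \<in> ET\<^sup>* \<Longrightarrow> (u, w) \<in> ET\<^sup>* \<or> (w, u) \<in> ET\<^sup>*"
proof (induction arbitrary: u rule: rtrancl_induct)
  case base
  then show ?case by blast
next
  case (step y z)
  show ?case
  proof (cases "u = z")
    case True
    then show ?thesis using step by (meson rtrancl.rtrancl_into_rtrancl)
  next
    case False
    then obtain y' where "(u, y') \<in> ET\<^sup>*" "(y', z) \<in> ET"
      using step.prems by (metis rtranclE)
    then have "y' = y" using parent_unique step.hyps(2) by blast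
    then show ?thesis using step.IH \<open>(u, y') \<in> ET\<^sup>*\<close> by blast
  qed
qed

lemma root_anc: "(a, \<rho>) \<in> ET\<^sup>* \<Longrightarrow> a = \<rho>"
  by (metis noparent rtranclE)

lemma anc_step: "(w, z) \<in> ET\<^sup>* \<Longrightarrow> w \<noteq> z \<Longrightarrow> (y, z) \<in> ET \<Longrightarrow> (w, y) \<in> ET\<^sup>*"
  by (metis parent_unique rtranclE)

lemma desc_step: "(p, a) \<in> ET\<^sup>* \<Longrightarrow> a \<noteq> p \<Longrightarrow> \<exists>d. (p, d) \<in> ET \<and> (d, a) \<in> ET\<^sup>*"
  by (metis converse_rtranclE)

definition is_lca where
  "is_lca a b w \<longleftrightarrow> w \<in> VT \<and> anc_le ET a w \<and> anc_le ET b w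
       \<and> (\<forall>w'\<in>VT. anc_le ET a w' \<and> anc_le ET b w' \<longrightarrow> anc_le ET w w')"

lemma is_lca_unique: "is_lca a b w1 \<Longrightarrow> is_lca a b w2 \<Longrightarrow> w1 = w2"
  unfolding is_lca_def anc_le_def using antisym by blast

lemma lca_exists: assumes "a \<in> VT" "b \<in> VT" shows "\<exists>w. is_lca a b w"
proof -
  define C where "C = {w\<in>VT. (w, a) \<in> ET\<^sup>* \<and> (w, b) \<in> ET\<^sup>*}"
  define h where "h w = card {y\<in>VT. (y, w) \<in> ET\<^sup>*}" for w
  have fC: "finite C" using fin C_def by auto
  have "\<rho> \<in> C" using C_def root_in reach assms by auto
  then have ne: "h ` C \<noteq> {}" by auto
  obtain w where wC: "w \<in> C" and hw: "h w = Max (h ` C)"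
    using Max_in[OF finite_imageI[OF fC] ne] by auto
  have "(w', w) \<in> ET\<^sup>*" if w'C: "w' \<in> C" for w'
  proof (rule ccontr)
    assume n: "(w', w) \<notin> ET\<^sup>*"
    then have ww': "(w, w') \<in> ET\<^sup>*" using chain w'C wC C_def by blast
    have sub: "{y\<in>VT. (y, w) \<in> ET\<^sup>*} \<subseteq> {y\<in>VT. (y, w') \<in> ET\<^sup>*}"
      using ww' by auto
    have "w' \<in> {y\<in>VT. (y, w') \<in> ET\<^sup>*}" "w' \<notin> {y\<in>VT. (y, w) \<in> ET\<^sup>*}"
      using w'C C_def n by auto
    then have "{y\<in>VT. (y, w) \<in> ET\<^sup>*} \<subset> {y\<in>VT. (y, w') \<in> ET\<^sup>*}" using sub by blast
    then have "h w < h w'" unfolding h_def using fin by (simp add: psubset_card_mono)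
    moreover have "h w' \<le> h w" using hw w'C fC by simp
    ultimately show False by simp
  qed
  then have "\<forall>w'\<in>VT. (w', a) \<in> ET\<^sup>* \<and> (w', b) \<in> ET\<^sup>* \<longrightarrow> (w', w) \<in> ET\<^sup>*"
    unfolding C_def by blast
  moreover have "w \<in> VT" "(w, a) \<in> ET\<^sup>*" "(w, b) \<in> ET\<^sup>*" using wC C_def by auto
  ultimately have "is_lca a b w" unfolding is_lca_def anc_le_def by simp
  then show ?thesis by blast
qed

lemma lca_eq: assumes h: "is_lca a b w" shows "lca VT ET a b = w"
  unfolding lca_def
proof (rule the_equality)
  show "w \<in> VT \<and> anc_le ET a w \<and> anc_le ET b w \<and>
    (\<forall>w'\<in>VT. anc_le ET a w' \<and> anc_le ET b w' \<longrightarrow> anc_le ET w w')"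
    using h unfolding is_lca_def by blast
next
  fix w' assume "w' \<in> VT \<and> anc_le ET a w' \<and> anc_le ET b w' \<and>
    (\<forall>w''\<in>VT. anc_le ET a w'' \<and> anc_le ET b w'' \<longrightarrow> anc_le ET w' w'')"
  then have "is_lca a b w'" unfolding is_lca_def by blast
  then show "w' = w" using is_lca_unique h by blast
qed

lemma lca_is: "a \<in> VT \<Longrightarrow> b \<in> VT \<Longrightarrow> is_lca a b (lca VT ET a b)"
proof -
  assume "a \<in> VT" "b \<in> VT"
  then obtain w where "is_lca a b w" using lca_exists by blast
  then show ?thesis using lca_eq by simp
qed

lemma lca_in: "a \<in> VT \<Longrightarrow> b \<in> VT \<Longrightarrow> lca VT ET a b \<in> VT"
  using lca_is unfolding is_lca_def by blast

lemma children_sub: "children ET v \<subseteq> VT" unfolding children_def using sub by auto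
lemma children_fin: "finite (children ET v)" using children_sub fin finite_subset by blast

end

lemma lca_embed:
  assumes T1: "rtree VT1 ET1 \<rho>1" and T2: "rtree VT2 ET2 \<rho>2"
    and fV: "f ` VT1 \<subseteq> VT2"
    and ord: "\<And>a b. a \<in> VT1 \<Longrightarrow> b \<in> VT1 \<Longrightarrow> (f a, f b) \<in> ET2\<^sup>* \<longleftrightarrow> (a, b) \<in> ET1\<^sup>*"
    and ab: "a \<in> VT1" "b \<in> VT1"
    and extra: "\<And>w'. w' \<in> VT2 \<Longrightarrow> w' \<notin> f ` VT1 \<Longrightarrow> (w', f a) \<in> ET2\<^sup>* \<Longrightarrow> (w', f b) \<in> ET2\<^sup>*
        \<Longrightarrow> \<exists>w''\<in>VT1. (w'', a) \<in> ET1\<^sup>* \<and> (w'', b) \<in> ET1\<^sup>* \<and> (w', f w'') \<in> ET2\<^sup>*"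
  shows "lca VT2 ET2 (f a) (f b) = f (lca VT1 ET1 a b)"
proof -
  define w where "w = lca VT1 ET1 a b"
  have w: "rtree.is_lca VT1 ET1 a b w" using rtree.lca_is[OF T1 ab] w_def by simp
  then have wV: "w \<in> VT1" and wa: "(w, a) \<in> ET1\<^sup>*" and wb: "(w, b) \<in> ET1\<^sup>*"
    and wmin: "\<And>w'. w' \<in> VT1 \<Longrightarrow> (w', a) \<in> ET1\<^sup>* \<Longrightarrow> (w', b) \<in> ET1\<^sup>* \<Longrightarrow> (w', w) \<in> ET1\<^sup>*"
    unfolding rtree.is_lca_def[OF T1] anc_le_def by blast+
  have "rtree.is_lca VT2 ET2 (f a) (f b) (f w)"
    unfolding rtree.is_lca_def[OF T2] anc_le_def
  proof (intro conjI ballI impI)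
    show "f w \<in> VT2" using fV wV by blast
    show "(f w, f a) \<in> ET2\<^sup>*" using ord wV ab wa by blast
    show "(f w, f b) \<in> ET2\<^sup>*" using ord wV ab wb by blast
  next
    fix w' assume w'V: "w' \<in> VT2" and c: "(w', f a) \<in> ET2\<^sup>* \<and> (w', f b) \<in> ET2\<^sup>*"
    show "(w', f w) \<in> ET2\<^sup>*"
    proof (cases "w' \<in> f ` VT1")
      case True
      then obtain u where u: "u \<in> VT1" "w' = f u" by blast
      then have "(u, a) \<in> ET1\<^sup>*" "(u, b) \<in> ET1\<^sup>*" using ord ab c by blast+
      then have "(u, w) \<in> ET1\<^sup>*" using wmin u by blast
      then show ?thesis using ord u wV by blast
    next
      case False
      then obtain w'' where w'': "w'' \<in> VT1" "(w'', a) \<in> ET1\<^sup>*" "(w'', b) \<in> ET1\<^sup>*" "(w', f w'') \<in> ET2\<^sup>*"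
        using extra w'V c by blast
      then have "(w'', w) \<in> ET1\<^sup>*" using wmin by blast
      then have "(f w'', f w) \<in> ET2\<^sup>*" using ord w'' wV by blast
      then show ?thesis using w'' by (meson rtrancl_trans)
    qed
  qed
  then show ?thesis using rtree.lca_eq[OF T2] w_def by blast
qed

lemma bm_transfer:
  assumes T1: "rtree VT1 ET1 \<rho>1" and T2: "rtree VT2 ET2 \<rho>2"
    and L1: "L1 \<subseteq> VT1"
    and ord: "\<And>a b. a \<in> VT1 \<Longrightarrow> b \<in> VT1 \<Longrightarrow> (f a, f b) \<in> ET2\<^sup>* \<longleftrightarrow> (a, b) \<in> ET1\<^sup>*"
    and fL: "f ` L1 \<subseteq> L2"
    and lcaf: "\<And>a b. a \<in> L1 \<Longrightarrow> b \<in> L1 \<Longrightarrow> lca VT2 ET2 (f a) (f b) = f (lca VT1 ET1 a b)"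
    and col: "\<And>a. a \<in> L1 \<Longrightarrow> \<tau>2 (f a) = \<tau>1 a"
    and newcol: "\<And>y. y \<in> L2 \<Longrightarrow> y \<notin> f ` L1 \<Longrightarrow> \<tau>2 y \<notin> \<tau>1 ` L1"
    and ab: "a \<in> L1" "b \<in> L1"
  shows "best_match VT2 ET2 L2 \<tau>2 (f a) (f b) \<longleftrightarrow> best_match VT1 ET1 L1 \<tau>1 a b"
proof -
  have lin: "lca VT1 ET1 u v \<in> VT1" if "u \<in> L1" "v \<in> L1" for u v
    using rtree.lca_in[OF T1] that L1 by blast
  show ?thesis
  proof
    assume bm: "best_match VT2 ET2 L2 \<tau>2 (f a) (f b)"
    show "best_match VT1 ET1 L1 \<tau>1 a b"
      unfolding best_match_def anc_le_def
    proof (intro conjI ballI impI)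
      show "a \<in> L1" "b \<in> L1" by (fact ab)+
      show "\<tau>1 a \<noteq> \<tau>1 b" using bm col ab unfolding best_match_def by metis
    next
      fix y assume y: "y \<in> L1" "\<tau>1 y = \<tau>1 b"
      then have "f y \<in> L2" "\<tau>2 (f y) = \<tau>2 (f b)" using fL col ab by auto
      then have "(lca VT2 ET2 (f a) (f y), lca VT2 ET2 (f a) (f b)) \<in> ET2\<^sup>*"
        using bm unfolding best_match_def anc_le_def by blast
      then show "(lca VT1 ET1 a y, lca VT1 ET1 a b) \<in> ET1\<^sup>*"
        using lcaf ord lin ab y by metis
    qed
  next
    assume bm: "best_match VT1 ET1 L1 \<tau>1 a b"
    show "best_match VT2 ET2 L2 \<tau>2 (f a) (f b)"
      unfolding best_match_def anc_le_def
    proof (intro conjI ballI impI)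
      show "f a \<in> L2" "f b \<in> L2" using ab fL by auto
      show "\<tau>2 (f a) \<noteq> \<tau>2 (f b)" using bm col ab unfolding best_match_def by metis
    next
      fix y' assume y': "y' \<in> L2" "\<tau>2 y' = \<tau>2 (f b)"
      have "\<tau>2 y' \<in> \<tau>1 ` L1" using y' col ab by auto
      then obtain y where y: "y \<in> L1" "y' = f y" using newcol y' by blast
      then have "\<tau>1 y = \<tau>1 b" using y' col ab by auto
      then have "(lca VT1 ET1 a y, lca VT1 ET1 a b) \<in> ET1\<^sup>*"
        using bm y unfolding best_match_def anc_le_def by blast
      then show "(lca VT2 ET2 (f a) y', lca VT2 ET2 (f a) (f b)) \<in> ET2\<^sup>*"
        using lcaf ord lin ab y by metis
    qed
  qed
qed

lemma rtrancl_map_prod: "(a, b) \<in> R\<^sup>* \<Longrightarrow> (h a, h b) \<in> (map_prod h h ` R)\<^sup>*"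
proof (induction rule: rtrancl_induct)
  case base then show ?case by simp
next
  case (step y z)
  then have "(h y, h z) \<in> map_prod h h ` R" by force
  with step.IH show ?case by (rule rtrancl.rtrancl_into_rtrancl)
qed

lemma rename_tree:
  assumes T: "rtree VT ET \<rho>" and inj: "inj_on f VT"
  shows "rtree (f ` VT) (map_prod f f ` ET) (f \<rho>)"
    and "\<And>a b. a \<in> VT \<Longrightarrow> b \<in> VT \<Longrightarrow> (f a, f b) \<in> (map_prod f f ` ET)\<^sup>* \<longleftrightarrow> (a, b) \<in> ET\<^sup>*"
    and "\<And>v. v \<in> VT \<Longrightarrow> children (map_prod f f ` ET) (f v) = f ` children ET v"
proof -
  interpret rtree VT ET \<rho> by (fact T)
  define g where "g = inv_into VT f"
  have gf: "g (f a) = a" if "a \<in> VT" for a using inj that g_def by simp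
  have bk: "map_prod g g ` (map_prod f f ` ET) = ET"
  proof (rule set_eqI)
    fix e :: "'a \<times> 'a"
    obtain a b where e: "e = (a, b)" by (cases e)
    show "e \<in> map_prod g g ` (map_prod f f ` ET) \<longleftrightarrow> e \<in> ET"
    proof
      assume "e \<in> map_prod g g ` (map_prod f f ` ET)"
      then obtain c d where cd: "(c, d) \<in> ET" "e = (g (f c), g (f d))" by auto
      then have "c \<in> VT" "d \<in> VT" using edge_in by blast+
      then show "e \<in> ET" using cd gf by simp
    next
      assume "e \<in> ET"
      then have ab: "a \<in> VT" "b \<in> VT" "(a, b) \<in> ET" using edge_in e by blast+
      have "map_prod g g (map_prod f f (a, b)) = e" using gf ab e by simp
      then show "e \<in> map_prod g g ` (map_prod f f ` ET)" using ab(3) by (metis image_eqI)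
    qed
  qed
  show ord: "(f a, f b) \<in> (map_prod f f ` ET)\<^sup>* \<longleftrightarrow> (a, b) \<in> ET\<^sup>*" if "a \<in> VT" "b \<in> VT" for a b
  proof
    assume "(f a, f b) \<in> (map_prod f f ` ET)\<^sup>*"
    then have "(g (f a), g (f b)) \<in> (map_prod g g ` (map_prod f f ` ET))\<^sup>*" by (rule rtrancl_map_prod)
    then have "(g (f a), g (f b)) \<in> ET\<^sup>*" by (simp only: bk)
    then show "(a, b) \<in> ET\<^sup>*" using gf that by simp
  qed (rule rtrancl_map_prod)
  show ch: "children (map_prod f f ` ET) (f v) = f ` children ET v" if "v \<in> VT" for v
  proof -
    have "(f v, w) \<in> map_prod f f ` ET \<longleftrightarrow> (\<exists>u. (v, u) \<in> ET \<and> w = f u)" for w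
    proof
      assume "(f v, w) \<in> map_prod f f ` ET"
      then obtain a u where e: "(a, u) \<in> ET" "f a = f v" "w = f u" by auto
      have "a \<in> VT" using edge_in[OF e(1)] by simp
      then have "a = v" using inj_onD[OF inj e(2)] that by simp
      then show "\<exists>u. (v, u) \<in> ET \<and> w = f u" using e by blast
    next
      assume "\<exists>u. (v, u) \<in> ET \<and> w = f u"
      then obtain u where u: "(v, u) \<in> ET" "w = f u" by blast
      have "map_prod f f (v, u) \<in> map_prod f f ` ET" using u(1) by (rule imageI)
      then show "(f v, w) \<in> map_prod f f ` ET" using u(2) by simp
    qed
    then have key: "(f v, w) \<in> map_prod f f ` ET \<longleftrightarrow> w \<in> f ` children ET v" for w
      unfolding children_def by auto
    show ?thesis
    proof (rule set_eqI)
      fix w show "w \<in> children (map_prod f f ` ET) (f v) \<longleftrightarrow> w \<in> f ` children ET v"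
        using key[of w] unfolding children_def[of "map_prod f f ` ET"] by simp
    qed
  qed
  show "rtree (f ` VT) (map_prod f f ` ET) (f \<rho>)"
    unfolding rtree_def rooted_tree_def
  proof (intro conjI ballI impI allI)
    show "finite (f ` VT)" using fin by simp
    show "f \<rho> \<in> f ` VT" using root_in by simp
    show "map_prod f f ` ET \<subseteq> f ` VT \<times> f ` VT" using sub by auto
  next
    fix p show "(p, f \<rho>) \<notin> map_prod f f ` ET"
    proof
      assume "(p, f \<rho>) \<in> map_prod f f ` ET"
      then obtain a u where e: "(a, u) \<in> ET" "f u = f \<rho>" by auto
      have "u \<in> VT" using edge_in[OF e(1)] by simp
      then have "u = \<rho>" using inj_onD[OF inj e(2)] root_in by simp
      then show False using e noparent by blast
    qed
  next
    fix v' assume v': "v' \<in> f ` VT" "v' \<noteq> f \<rho>"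
    then obtain v where v: "v \<in> VT" "v' = f v" "v \<noteq> \<rho>" by blast
    then obtain p where p: "(p, v) \<in> ET" using parent_ex by blast
    show "\<exists>!p. (p, v') \<in> map_prod f f ` ET"
    proof (rule ex1I[of _ "f p"])
      have "map_prod f f (p, v) \<in> map_prod f f ` ET" using p by (rule imageI)
      then show "(f p, v') \<in> map_prod f f ` ET" using v by simp
    next
      fix p' assume "(p', v') \<in> map_prod f f ` ET"
      then obtain a u where e: "(a, u) \<in> ET" "f u = f v" "p' = f a" using v by auto
      have "u \<in> VT" using edge_in[OF e(1)] by simp
      then have "u = v" using inj_onD[OF inj e(2)] v by simp
      then show "p' = f p" using e p parent_unique by blast
    qed
  next
    fix v' assume "v' \<in> f ` VT"
    then obtain v where v: "v \<in> VT" "v' = f v" by blast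
    show "(f \<rho>, v') \<in> (map_prod f f ` ET)\<^sup>*" using rtrancl_map_prod[OF reach[OF v(1)]] v(2) by simp
  qed
qed

lemma add_leaf:
  assumes T: "rtree VT ET \<rho>" and p: "p \<in> VT" and z: "z \<notin> VT"
  shows "rtree (insert z VT) (insert (p, z) ET) \<rho>"
    and "\<And>a b. a \<in> VT \<Longrightarrow> b \<in> VT \<Longrightarrow> (a, b) \<in> (insert (p, z) ET)\<^sup>* \<longleftrightarrow> (a, b) \<in> ET\<^sup>*"
    and "\<And>a. a \<in> VT \<Longrightarrow> (a, z) \<in> (insert (p, z) ET)\<^sup>* \<longleftrightarrow> (a, p) \<in> ET\<^sup>*"
    and "\<And>v. v \<in> VT \<Longrightarrow> children (insert (p, z) ET) v = (if v = p then insert z (children ET v) else children ET v)"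
    and "children (insert (p, z) ET) z = {}"
proof -
  interpret rtree VT ET \<rho> by (fact T)
  have zp: "z \<noteq> p" using p z by blast
  have claim: "(a, y) \<in> (insert (p, z) ET)\<^sup>* \<Longrightarrow> a \<in> VT \<Longrightarrow>
      (y \<in> VT \<and> (a, y) \<in> ET\<^sup>*) \<or> (y = z \<and> (a, p) \<in> ET\<^sup>*)" for a y
  proof (induction rule: rtrancl_induct)
    case base then show ?case by simp
  next
    case (step y d)
    from step.IH[OF step.prems] show ?case
    proof
      assume y: "y \<in> VT \<and> (a, y) \<in> ET\<^sup>*"
      show ?case
      proof (cases "(y, d) = (p, z)")
        case True then show ?thesis using y by simp
      next
        case False
        then have "(y, d) \<in> ET" using step.hyps(2) by auto
        then show ?thesis using y edge_in by (meson rtrancl.rtrancl_into_rtrancl)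
      qed
    next
      assume y: "y = z \<and> (a, p) \<in> ET\<^sup>*"
      then have "(z, d) \<in> insert (p, z) ET" using step.hyps(2) by simp
      then have "(z, d) \<in> ET" using zp by simp
      then show ?case using edge_in z by blast
    qed
  qed
  have mono: "ET\<^sup>* \<subseteq> (insert (p, z) ET)\<^sup>*" by (rule rtrancl_mono) blast
  show ord: "(a, b) \<in> (insert (p, z) ET)\<^sup>* \<longleftrightarrow> (a, b) \<in> ET\<^sup>*" if "a \<in> VT" "b \<in> VT" for a b
    using claim[of a b] that z mono by blast
  show anz: "(a, z) \<in> (insert (p, z) ET)\<^sup>* \<longleftrightarrow> (a, p) \<in> ET\<^sup>*" if "a \<in> VT" for a
  proof
    assume "(a, z) \<in> (insert (p, z) ET)\<^sup>*"
    then show "(a, p) \<in> ET\<^sup>*" using claim[of a z] that z by blast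
  next
    assume "(a, p) \<in> ET\<^sup>*"
    then have "(a, p) \<in> (insert (p, z) ET)\<^sup>*" using mono by blast
    then show "(a, z) \<in> (insert (p, z) ET)\<^sup>*" by (simp add: rtrancl.rtrancl_into_rtrancl)
  qed
  show "children (insert (p, z) ET) v = (if v = p then insert z (children ET v) else children ET v)"
    if "v \<in> VT" for v
    unfolding children_def by auto
  show "children (insert (p, z) ET) z = {}"
    unfolding children_def using zp edge_in z by auto
  show "rtree (insert z VT) (insert (p, z) ET) \<rho>"
    unfolding rtree_def rooted_tree_def
  proof (intro conjI ballI impI allI)
    show "finite (insert z VT)" using fin by simp
    show "\<rho> \<in> insert z VT" using root_in by simp
    show "insert (p, z) ET \<subseteq> insert z VT \<times> insert z VT" using sub p by auto
  next
    fix x show "(x, \<rho>) \<notin> insert (p, z) ET" using noparent root_in z by auto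
  next
    fix v assume v: "v \<in> insert z VT" "v \<noteq> \<rho>"
    show "\<exists>!x. (x, v) \<in> insert (p, z) ET"
    proof (cases "v = z")
      case True
      show ?thesis
      proof (rule ex1I[of _ p])
        show "(p, v) \<in> insert (p, z) ET" using True by simp
        fix x assume "(x, v) \<in> insert (p, z) ET"
        then show "x = p" using True edge_in z by auto
      qed
    next
      case False
      then have vV: "v \<in> VT" using v by simp
      then obtain x where x: "(x, v) \<in> ET" using parent_ex v by blast
      show ?thesis
      proof (rule ex1I[of _ x])
        show "(x, v) \<in> insert (p, z) ET" using x by simp
        fix x' assume "(x', v) \<in> insert (p, z) ET"
        then have "(x', v) \<in> ET" using False by simp
        then show "x' = x" using x parent_unique by blast
      qed
    qed
  next
    fix v assume v: "v \<in> insert z VT"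
    show "(\<rho>, v) \<in> (insert (p, z) ET)\<^sup>*"
    proof (cases "v = z")
      case True then show ?thesis using anz root_in reach p by simp
    next
      case False then show ?thesis using v reach mono by blast
    qed
  qed
qed

lemma add_root:
  assumes T: "rtree VT ET \<rho>" and r: "r \<notin> VT"
  shows "rtree (insert r VT) (insert (r, \<rho>) ET) r"
    and "\<And>a b. a \<in> VT \<Longrightarrow> b \<in> VT \<Longrightarrow> (a, b) \<in> (insert (r, \<rho>) ET)\<^sup>* \<longleftrightarrow> (a, b) \<in> ET\<^sup>*"
    and "\<And>v. v \<in> VT \<Longrightarrow> children (insert (r, \<rho>) ET) v = children ET v"
    and "children (insert (r, \<rho>) ET) r = {\<rho>}"
proof -
  interpret rtree VT ET \<rho> by (fact T)
  have claim: "(a, y) \<in> (insert (r, \<rho>) ET)\<^sup>* \<Longrightarrow> a \<in> VT \<Longrightarrow> y \<in> VT \<and> (a, y) \<in> ET\<^sup>*" for a y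
  proof (induction rule: rtrancl_induct)
    case base then show ?case by simp
  next
    case (step y d)
    then have "y \<in> VT" "(a, y) \<in> ET\<^sup>*" by auto
    moreover have "y \<noteq> r" using r \<open>y \<in> VT\<close> by blast
    ultimately have "(y, d) \<in> ET" using step.hyps(2) by simp
    then show ?case using \<open>(a, y) \<in> ET\<^sup>*\<close> edge_in by (meson rtrancl.rtrancl_into_rtrancl)
  qed
  have mono: "ET\<^sup>* \<subseteq> (insert (r, \<rho>) ET)\<^sup>*" by (rule rtrancl_mono) blast
  show "(a, b) \<in> (insert (r, \<rho>) ET)\<^sup>* \<longleftrightarrow> (a, b) \<in> ET\<^sup>*" if "a \<in> VT" "b \<in> VT" for a b
    using claim[of a b] that mono by blast
  show "children (insert (r, \<rho>) ET) v = children ET v" if "v \<in> VT" for v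
    unfolding children_def using that r by auto
  show "children (insert (r, \<rho>) ET) r = {\<rho>}"
    unfolding children_def using r edge_in by auto
  show "rtree (insert r VT) (insert (r, \<rho>) ET) r"
    unfolding rtree_def rooted_tree_def
  proof (intro conjI ballI impI allI)
    show "finite (insert r VT)" using fin by simp
    show "r \<in> insert r VT" by simp
    show "insert (r, \<rho>) ET \<subseteq> insert r VT \<times> insert r VT" using sub root_in by auto
  next
    fix x show "(x, r) \<notin> insert (r, \<rho>) ET" using edge_in r root_in by auto
  next
    fix v assume v: "v \<in> insert r VT" "v \<noteq> r"
    then have vV: "v \<in> VT" by simp
    show "\<exists>!x. (x, v) \<in> insert (r, \<rho>) ET"
    proof (cases "v = \<rho>")
      case True
      show ?thesis
      proof (rule ex1I[of _ r])
        show "(r, v) \<in> insert (r, \<rho>) ET" using True by simp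
        fix x assume "(x, v) \<in> insert (r, \<rho>) ET"
        then show "x = r" using True noparent by auto
      qed
    next
      case False
      then obtain x where x: "(x, v) \<in> ET" using parent_ex vV by blast
      show ?thesis
      proof (rule ex1I[of _ x])
        show "(x, v) \<in> insert (r, \<rho>) ET" using x by simp
        fix x' assume "(x', v) \<in> insert (r, \<rho>) ET"
        then have "(x', v) \<in> ET" using False by simp
        then show "x' = x" using x parent_unique by blast
      qed
    qed
  next
    fix v assume v: "v \<in> insert r VT"
    show "(r, v) \<in> (insert (r, \<rho>) ET)\<^sup>*"
    proof (cases "v = r")
      case True then show ?thesis by simp
    next
      case False
      then have "(\<rho>, v) \<in> (insert (r, \<rho>) ET)\<^sup>*" using v reach mono by blast
      moreover have "(r, \<rho>) \<in> insert (r, \<rho>) ET" by simp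
      ultimately show ?thesis by (meson converse_rtrancl_into_rtrancl)
    qed
  qed
qed

lemma remove_leaf:
  assumes T: "rtree VT ET \<rho>" and z: "z \<in> VT" "z \<noteq> \<rho>" and cz: "children ET z = {}"
  shows "rtree (VT - {z}) {e \<in> ET. snd e \<noteq> z} \<rho>"
    and "\<And>a b. a \<in> VT - {z} \<Longrightarrow> b \<in> VT - {z} \<Longrightarrow> (a, b) \<in> {e \<in> ET. snd e \<noteq> z}\<^sup>* \<longleftrightarrow> (a, b) \<in> ET\<^sup>*"
    and "\<And>v. children {e \<in> ET. snd e \<noteq> z} v = children ET v - {z}"
proof -
  interpret rtree VT ET \<rho> by (fact T)
  have nz: "(z, d) \<notin> ET" for d using cz unfolding children_def by blast
  have claim: "(a, y) \<in> ET\<^sup>* \<Longrightarrow> y \<noteq> z \<Longrightarrow> (a, y) \<in> {e \<in> ET. snd e \<noteq> z}\<^sup>*" for a y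
  proof (induction rule: rtrancl_induct)
    case base then show ?case by simp
  next
    case (step y d)
    then have "y \<noteq> z" using nz by blast
    then have "(a, y) \<in> {e \<in> ET. snd e \<noteq> z}\<^sup>*" using step.IH by blast
    moreover have "(y, d) \<in> {e \<in> ET. snd e \<noteq> z}" using step by simp
    ultimately show ?case by (rule rtrancl.rtrancl_into_rtrancl)
  qed
  have mono: "{e \<in> ET. snd e \<noteq> z}\<^sup>* \<subseteq> ET\<^sup>*" by (rule rtrancl_mono) blast
  show "(a, b) \<in> {e \<in> ET. snd e \<noteq> z}\<^sup>* \<longleftrightarrow> (a, b) \<in> ET\<^sup>*" if "a \<in> VT - {z}" "b \<in> VT - {z}" for a b
    using claim[of a b] that mono by blast
  show "children {e \<in> ET. snd e \<noteq> z} v = children ET v - {z}" for v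
    unfolding children_def by auto
  show "rtree (VT - {z}) {e \<in> ET. snd e \<noteq> z} \<rho>"
    unfolding rtree_def rooted_tree_def
  proof (intro conjI ballI impI allI)
    show "finite (VT - {z})" using fin by simp
    show "\<rho> \<in> VT - {z}" using root_in z by simp
    show "{e \<in> ET. snd e \<noteq> z} \<subseteq> (VT - {z}) \<times> (VT - {z})" using sub nz by auto
  next
    fix x show "(x, \<rho>) \<notin> {e \<in> ET. snd e \<noteq> z}" using noparent by auto
  next
    fix v assume v: "v \<in> VT - {z}" "v \<noteq> \<rho>"
    then obtain x where x: "(x, v) \<in> ET" using parent_ex by blast
    show "\<exists>!x. (x, v) \<in> {e \<in> ET. snd e \<noteq> z}"
    proof (rule ex1I[of _ x])
      show "(x, v) \<in> {e \<in> ET. snd e \<noteq> z}" using x v by simp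
      fix x' assume "(x', v) \<in> {e \<in> ET. snd e \<noteq> z}"
      then show "x' = x" using x parent_unique by auto
    qed
  next
    fix v assume v: "v \<in> VT - {z}"
    then show "(\<rho>, v) \<in> {e \<in> ET. snd e \<noteq> z}\<^sup>*" using claim reach by blast
  qed
qed

lemma contract:
  assumes T: "rtree VT ET \<rho>" and p: "p \<in> VT" "p \<noteq> \<rho>" and cp: "children ET p = {c}"
    and q: "(q, p) \<in> ET"
  shows "rtree (VT - {p}) ({e \<in> ET. fst e \<noteq> p \<and> snd e \<noteq> p} \<union> {(q, c)}) \<rho>"
    and "\<And>a b. a \<in> VT - {p} \<Longrightarrow> b \<in> VT - {p} \<Longrightarrow>
          (a, b) \<in> ({e \<in> ET. fst e \<noteq> p \<and> snd e \<noteq> p} \<union> {(q, c)})\<^sup>* \<longleftrightarrow> (a, b) \<in> ET\<^sup>*"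
    and "\<And>v. v \<noteq> p \<Longrightarrow> children ({e \<in> ET. fst e \<noteq> p \<and> snd e \<noteq> p} \<union> {(q, c)}) v
           = (if v = q then insert c (children ET q - {p}) else children ET v)"
    and "q \<noteq> p" "c \<noteq> p" "q \<in> VT" "c \<in> VT" "c \<notin> children ET q"
proof -
  interpret rtree VT ET \<rho> by (fact T)
  define ET2 where "ET2 = {e \<in> ET. fst e \<noteq> p \<and> snd e \<noteq> p} \<union> {(q, c)}"
  have pc: "(p, c) \<in> ET" using cp unfolding children_def by blast
  have pch: "(p, d) \<in> ET \<Longrightarrow> d = c" for d using cp unfolding children_def by blast
  show qp: "q \<noteq> p" using q acyclic by blast
  show cp': "c \<noteq> p" using pc acyclic by blast
  show qV: "q \<in> VT" using q edge_in by blast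
  show cV: "c \<in> VT" using pc edge_in by blast
  show cq: "c \<notin> children ET q"
  proof
    assume "c \<in> children ET q"
    then have "(q, c) \<in> ET" unfolding children_def by simp
    then show False using parent_unique pc qp by blast
  qed
  have crho: "c \<noteq> \<rho>" using pc noparent by blast
  have sub2: "ET2 \<subseteq> ET\<^sup>*"
  proof
    fix e assume "e \<in> ET2"
    then show "e \<in> ET\<^sup>*" unfolding ET2_def using q pc by auto
  qed
  have mono: "ET2\<^sup>* \<subseteq> ET\<^sup>*" using rtrancl_subset_rtrancl[OF sub2] .
  have claim: "(a, y) \<in> ET\<^sup>* \<Longrightarrow> a \<in> VT - {p} \<Longrightarrow>
      (y \<noteq> p \<longrightarrow> (a, y) \<in> ET2\<^sup>*) \<and> (y = p \<longrightarrow> (a, q) \<in> ET2\<^sup>*)" for a y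
  proof (induction rule: rtrancl_induct)
    case base then show ?case by simp
  next
    case (step y d)
    note IH = step.IH[OF step.prems]
    show ?case
    proof (intro conjI impI)
      assume "d = p"
      then have "y = q" using step.hyps(2) q parent_unique by blast
      then show "(a, q) \<in> ET2\<^sup>*" using IH qp by blast
    next
      assume dp: "d \<noteq> p"
      show "(a, d) \<in> ET2\<^sup>*"
      proof (cases "y = p")
        case True
        then have "d = c" using pch step.hyps(2) by blast
        moreover have "(a, q) \<in> ET2\<^sup>*" using IH True by blast
        moreover have "(q, c) \<in> ET2" unfolding ET2_def by simp
        ultimately show ?thesis by (simp add: rtrancl.rtrancl_into_rtrancl)
      next
        case False
        then have "(a, y) \<in> ET2\<^sup>*" using IH by blast
        moreover have "(y, d) \<in> ET2" unfolding ET2_def using False dp step.hyps(2) by simp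
        ultimately show ?thesis by (rule rtrancl.rtrancl_into_rtrancl)
      qed
    qed
  qed
  show "(a, b) \<in> ET2\<^sup>* \<longleftrightarrow> (a, b) \<in> ET\<^sup>*" if "a \<in> VT - {p}" "b \<in> VT - {p}" for a b
    using claim[of a b] that mono by blast
  show "children ET2 v = (if v = q then insert c (children ET q - {p}) else children ET v)"
    if "v \<noteq> p" for v
  proof (cases "v = q")
    case True
    then show ?thesis unfolding children_def ET2_def using that by auto
  next
    case False
    have "(v, p) \<notin> ET" using False q parent_unique by blast
    then show ?thesis unfolding children_def ET2_def using that False by auto
  qed
  show "rtree (VT - {p}) ET2 \<rho>"
    unfolding rtree_def rooted_tree_def
  proof (intro conjI ballI impI allI)
    show "finite (VT - {p})" using fin by simp
    show "\<rho> \<in> VT - {p}" using root_in p by simp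
    show "ET2 \<subseteq> (VT - {p}) \<times> (VT - {p})" unfolding ET2_def using sub qp cp' qV cV by auto
  next
    fix x show "(x, \<rho>) \<notin> ET2" unfolding ET2_def using noparent crho by auto
  next
    fix v assume v: "v \<in> VT - {p}" "v \<noteq> \<rho>"
    show "\<exists>!x. (x, v) \<in> ET2"
    proof (cases "v = c")
      case True
      show ?thesis
      proof (rule ex1I[of _ q])
        show "(q, v) \<in> ET2" unfolding ET2_def using True by simp
        fix x assume "(x, v) \<in> ET2"
        then show "x = q" unfolding ET2_def using True pc parent_unique by auto
      qed
    next
      case False
      obtain x where x: "(x, v) \<in> ET" using parent_ex v by blast
      have xp: "x \<noteq> p" using pch x False by blast
      show ?thesis
      proof (rule ex1I[of _ x])
        show "(x, v) \<in> ET2" unfolding ET2_def using x xp v by simp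
        fix x' assume "(x', v) \<in> ET2"
        then have "(x', v) \<in> ET" unfolding ET2_def using False by auto
        then show "x' = x" using x parent_unique by blast
      qed
    qed
  next
    fix v assume v: "v \<in> VT - {p}"
    then show "(\<rho>, v) \<in> ET2\<^sup>*" using claim[of \<rho> v] reach root_in p by blast
  qed
qed

context rtree begin

lemma leaf_desc: "children ET z = {} \<Longrightarrow> (z, a) \<in> ET\<^sup>* \<Longrightarrow> a = z"
  by (metis children_def converse_rtranclE empty_iff mem_Collect_eq)

lemma desc_child: "(v, a) \<in> ET\<^sup>* \<Longrightarrow> a \<noteq> v \<Longrightarrow> \<exists>d\<in>children ET v. (d, a) \<in> ET\<^sup>*"
  using desc_step unfolding children_def by blast

lemma root_leaf: "children ET \<rho> = {} \<Longrightarrow> VT = {\<rho>}"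
  using reach leaf_desc root_in by blast

lemma root_one_child: "children ET \<rho> = {z} \<Longrightarrow> children ET z = {} \<Longrightarrow> VT \<subseteq> {\<rho>, z}"
proof
  fix v assume a: "children ET \<rho> = {z}" "children ET z = {}" "v \<in> VT"
  show "v \<in> {\<rho>, z}"
  proof (cases "v = \<rho>")
    case False
    then obtain d where "d \<in> children ET \<rho>" "(d, v) \<in> ET\<^sup>*" using desc_child reach a(3) by blast
    then have "(z, v) \<in> ET\<^sup>*" using a(1) by simp
    then show ?thesis using leaf_desc a(2) by blast
  qed simp
qed

lemma tdeg_ge: "v \<in> VT \<Longrightarrow> v \<noteq> \<rho> \<Longrightarrow> tdeg ET \<rho> v = card (children ET v) + 1"
  unfolding tdeg_def by simp

end

lemma fresh_Inr: "finite (A :: ('a + nat) set) \<Longrightarrow> \<exists>k. Inr k \<notin> A"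
proof -
  assume "finite A"
  then have "finite (Inr -` A :: nat set)" by (simp add: finite_vimageI)
  then obtain k where "k \<notin> Inr -` A" using ex_new_if_finite infinite_UNIV_nat by blast
  then show ?thesis by auto
qed

lemma fwd_tree:
  fixes VT :: "('a + nat) set" and V :: "'a set"
  assumes P: "phylo_tree VT ET \<rho> (Inl ` V)" and xV: "x \<notin> V"
  shows "\<exists>VT2 ET2 \<rho>2 f. rtree VT2 ET2 \<rho>2 \<and> phylo_tree VT2 ET2 \<rho>2 (Inl ` insert x V)
     \<and> f ` VT \<subseteq> VT2 \<and> VT2 \<subseteq> insert (Inl x) (insert \<rho>2 (f ` VT)) \<and> Inl x \<notin> f ` VT
     \<and> (\<forall>a\<in>VT. \<forall>b\<in>VT. (f a, f b) \<in> ET2\<^sup>* \<longleftrightarrow> (a, b) \<in> ET\<^sup>*)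
     \<and> (\<rho>2, Inl x) \<in> ET2 \<and> (\<forall>a\<in>Inl ` V. f a = a)"
proof -
  define z :: "'a + nat" where "z = Inl x"
  define L :: "('a + nat) set" where "L = Inl ` V"
  have T: "rtree VT ET \<rho>" using P unfolding phylo_tree_def rtree_def by blast
  interpret rtree VT ET \<rho> by (fact T)
  have leavesL: "leaves VT ET = L" using P unfolding phylo_tree_def L_def by blast
  have deg: "\<And>v. v \<in> VT \<Longrightarrow> v \<notin> L \<Longrightarrow> v \<noteq> \<rho> \<Longrightarrow> tdeg ET \<rho> v \<ge> 3"
    using P unfolding phylo_tree_def L_def by blast
  have LV: "L \<subseteq> VT" using leavesL unfolding leaves_def by blast
  have zL: "z \<notin> L" using xV unfolding z_def L_def by auto
  obtain k where k: "Inr k \<notin> VT" using fresh_Inr fin by blast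
  define f where "f v = (if v = z then Inr k else v)" for v
  have inj: "inj_on f VT" unfolding inj_on_def f_def using k by auto
  have fL: "f a = a" if "a \<in> L" for a using that zL f_def by auto
  have zf: "z \<notin> f ` VT" unfolding f_def z_def by auto
  define ETr where "ETr = map_prod f f ` ET"
  have Tr: "rtree (f ` VT) ETr (f \<rho>)" using rename_tree(1)[OF T inj] ETr_def by simp
  have ordr: "\<And>a b. a \<in> VT \<Longrightarrow> b \<in> VT \<Longrightarrow> (f a, f b) \<in> ETr\<^sup>* \<longleftrightarrow> (a, b) \<in> ET\<^sup>*"
    using rename_tree(2)[OF T inj] ETr_def by simp
  have chr: "\<And>v. v \<in> VT \<Longrightarrow> children ETr (f v) = f ` children ET v"
    using rename_tree(3)[OF T inj] ETr_def by simp
  have fLL: "f ` L = L" using fL by (simp add: image_cong)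
  have Lz: "Inl ` insert x V = insert z L" unfolding z_def L_def by simp
  show ?thesis
  proof (cases "\<rho> \<in> L")
    case False
    then have chrho: "children ET \<rho> \<noteq> {}" using leavesL root_in unfolding leaves_def by blast
    define VT2 where "VT2 = insert z (f ` VT)"
    define ET2 where "ET2 = insert (f \<rho>, z) ETr"
    have frV: "f \<rho> \<in> f ` VT" using root_in by simp
    have T2: "rtree VT2 ET2 (f \<rho>)" using add_leaf(1)[OF Tr frV zf] VT2_def ET2_def by simp
    have ord2: "\<And>a b. a \<in> f ` VT \<Longrightarrow> b \<in> f ` VT \<Longrightarrow> (a, b) \<in> ET2\<^sup>* \<longleftrightarrow> (a, b) \<in> ETr\<^sup>*"
      using add_leaf(2)[OF Tr frV zf] ET2_def by simp
    have ch2: "\<And>v. v \<in> f ` VT \<Longrightarrow> children ET2 v = (if v = f \<rho> then insert z (children ETr v) else children ETr v)"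
      using add_leaf(4)[OF Tr frV zf] ET2_def by simp
    have ch2z: "children ET2 z = {}" using add_leaf(5)[OF Tr frV zf] ET2_def by simp
    have chw: "children ET2 (f w) = (if w = \<rho> then insert z (f ` children ET w) else f ` children ET w)"
      if "w \<in> VT" for w
      using ch2[of "f w"] chr[OF that] that inj_onD[OF inj _ that root_in] by auto
    have lv2: "leaves VT2 ET2 = insert z L"
    proof (rule set_eqI)
      fix v show "v \<in> leaves VT2 ET2 \<longleftrightarrow> v \<in> insert z L"
      proof (cases "v = z")
        case True then show ?thesis using ch2z unfolding leaves_def VT2_def by simp
      next
        case False
        show ?thesis
        proof
          assume "v \<in> leaves VT2 ET2"
          then obtain w where w: "w \<in> VT" "v = f w" "children ET2 (f w) = {}"
            using False unfolding leaves_def VT2_def by auto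
          then have "w \<noteq> \<rho>" "children ET w = {}" using chw[OF w(1)] by (auto split: if_splits)
          then have "w \<in> L" using leavesL w(1) unfolding leaves_def by blast
          then show "v \<in> insert z L" using w fL by simp
        next
          assume "v \<in> insert z L"
          then have vL: "v \<in> L" using False by simp
          then have "v \<in> VT" "children ET v = {}" using leavesL unfolding leaves_def by auto
          moreover have "v \<noteq> \<rho>" using vL False \<open>\<rho> \<notin> L\<close> by blast
          ultimately have "children ET2 (f v) = {}" using chw by simp
          then show "v \<in> leaves VT2 ET2" using fL[OF vL] \<open>v \<in> VT\<close> unfolding leaves_def VT2_def by (metis (mono_tags, lifting) image_eqI insertI2 mem_Collect_eq)
        qed
      qed
    qed
    have ph: "phylo_tree VT2 ET2 (f \<rho>) (Inl ` insert x V)"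
      unfolding phylo_tree_def Lz
    proof (intro conjI ballI impI)
      show "rooted_tree VT2 ET2 (f \<rho>)" using T2 unfolding rtree_def .
      show "leaves VT2 ET2 = insert z L" by (fact lv2)
    next
      fix v assume v: "v \<in> VT2" "v \<notin> insert z L \<and> v \<noteq> f \<rho>"
      then obtain w where w: "w \<in> VT" "v = f w" unfolding VT2_def by auto
      then have wr: "w \<noteq> \<rho>" using v by blast
      have wL: "w \<notin> L" using w v fL by auto
      have "tdeg ET2 (f \<rho>) v = card (f ` children ET w) + 1"
        unfolding tdeg_def using chw[OF w(1)] wr w v by simp
      also have "card (f ` children ET w) = card (children ET w)"
        using card_image inj children_sub inj_on_subset by metis
      finally show "3 \<le> tdeg ET2 (f \<rho>) v" using deg[OF w(1) wL wr] tdeg_ge[OF w(1) wr] by simp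
    qed
    have ord: "\<forall>a\<in>VT. \<forall>b\<in>VT. (f a, f b) \<in> ET2\<^sup>* \<longleftrightarrow> (a, b) \<in> ET\<^sup>*" using ord2 ordr by simp
    show ?thesis
      apply (rule exI[of _ VT2], rule exI[of _ ET2], rule exI[of _ "f \<rho>"], rule exI[of _ f])
      using T2 ph ord fL zf unfolding VT2_def ET2_def z_def L_def by auto
  next
    case True
    then have chrho: "children ET \<rho> = {}" using leavesL root_in unfolding leaves_def by blast
    then have VTr: "VT = {\<rho>}" using root_leaf by blast
    obtain k2 where k2: "Inr k2 \<notin> f ` VT" using fresh_Inr fin by blast
    define r :: "'a + nat" where "r = Inr k2"
    have rz: "r \<noteq> z" unfolding r_def z_def by simp
    define VT1 where "VT1 = insert r (f ` VT)"
    define ET1 where "ET1 = insert (r, f \<rho>) ETr"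
    have T1: "rtree VT1 ET1 r" using add_root(1)[OF Tr k2] VT1_def ET1_def r_def by simp
    have ord1: "\<And>a b. a \<in> f ` VT \<Longrightarrow> b \<in> f ` VT \<Longrightarrow> (a, b) \<in> ET1\<^sup>* \<longleftrightarrow> (a, b) \<in> ETr\<^sup>*"
      using add_root(2)[OF Tr k2] ET1_def r_def by simp
    have ch1: "\<And>v. v \<in> f ` VT \<Longrightarrow> children ET1 v = children ETr v"
      using add_root(3)[OF Tr k2] ET1_def r_def by simp
    have ch1r: "children ET1 r = {f \<rho>}" using add_root(4)[OF Tr k2] ET1_def r_def by simp
    have rV1: "r \<in> VT1" unfolding VT1_def by simp
    have zV1: "z \<notin> VT1" unfolding VT1_def using zf rz by simp
    define VT2 where "VT2 = insert z VT1"
    define ET2 where "ET2 = insert (r, z) ET1"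
    have T2: "rtree VT2 ET2 r" using add_leaf(1)[OF T1 rV1 zV1] VT2_def ET2_def by simp
    have ord2: "\<And>a b. a \<in> VT1 \<Longrightarrow> b \<in> VT1 \<Longrightarrow> (a, b) \<in> ET2\<^sup>* \<longleftrightarrow> (a, b) \<in> ET1\<^sup>*"
      using add_leaf(2)[OF T1 rV1 zV1] ET2_def by simp
    have ch2: "\<And>v. v \<in> VT1 \<Longrightarrow> children ET2 v = (if v = r then insert z (children ET1 v) else children ET1 v)"
      using add_leaf(4)[OF T1 rV1 zV1] ET2_def by simp
    have ch2z: "children ET2 z = {}" using add_leaf(5)[OF T1 rV1 zV1] ET2_def by simp
    have frr: "f \<rho> \<noteq> r" using k2 root_in r_def by (metis imageI)
    have chfr: "children ET2 (f \<rho>) = {}"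
      using ch2[of "f \<rho>"] ch1[of "f \<rho>"] chr[OF root_in] chrho frr root_in unfolding VT1_def by simp
    have ch2r: "children ET2 r \<noteq> {}" using ch2[OF rV1] by simp
    have V2: "VT2 = {z, r, f \<rho>}" unfolding VT2_def VT1_def using VTr by auto
    have fr: "f \<rho> = \<rho>" using fL True by blast
    have Lr: "L = {\<rho>}" using LV VTr True by blast
    have lv2: "leaves VT2 ET2 = insert z L"
      unfolding leaves_def V2 using ch2z chfr ch2r fr Lr by auto
    have ph: "phylo_tree VT2 ET2 r (Inl ` insert x V)"
      unfolding phylo_tree_def Lz
    proof (intro conjI ballI impI)
      show "rooted_tree VT2 ET2 r" using T2 unfolding rtree_def .
      show "leaves VT2 ET2 = insert z L" by (fact lv2)
    next
      fix v assume v: "v \<in> VT2" "v \<notin> insert z L \<and> v \<noteq> r"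
      then show "3 \<le> tdeg ET2 r v" using V2 fr Lr by auto
    qed
    have ord: "\<forall>a\<in>VT. \<forall>b\<in>VT. (f a, f b) \<in> ET2\<^sup>* \<longleftrightarrow> (a, b) \<in> ET\<^sup>*"
      using ord2 ord1 ordr unfolding VT1_def by simp
    show ?thesis
      apply (rule exI[of _ VT2], rule exI[of _ ET2], rule exI[of _ r], rule exI[of _ f])
      using T2 ph ord fL zf unfolding VT2_def VT1_def ET2_def z_def L_def by auto
  qed
qed

lemma fwd_rbm:
  assumes T: "rtree VT ET \<rho>" and LV: "L \<subseteq> VT" and T2: "rtree VT2 ET2 \<rho>2"
    and fV: "f ` VT \<subseteq> VT2" and V2: "VT2 \<subseteq> insert z (insert \<rho>2 (f ` VT))"
    and zf: "z \<notin> f ` VT"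
    and ord: "\<forall>a\<in>VT. \<forall>b\<in>VT. (f a, f b) \<in> ET2\<^sup>* \<longleftrightarrow> (a, b) \<in> ET\<^sup>*"
    and e: "(\<rho>2, z) \<in> ET2" and L2: "L2 = insert z L" and fL: "\<forall>a\<in>L. f a = a"
    and cz: "children ET2 z = {}"
    and col: "\<forall>a\<in>L. \<tau>2 a = \<tau> a" and zcol: "\<tau>2 z \<notin> \<tau> ` L"
  shows "\<And>a b. a \<in> L \<Longrightarrow> b \<in> L \<Longrightarrow>
           reciprocal_best_match VT2 ET2 L2 \<tau>2 a b \<longleftrightarrow> reciprocal_best_match VT ET L \<tau> a b"
    and "\<And>a. a \<in> L \<Longrightarrow> reciprocal_best_match VT2 ET2 L2 \<tau>2 a z \<and> reciprocal_best_match VT2 ET2 L2 \<tau>2 z a"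
    and "\<not> reciprocal_best_match VT2 ET2 L2 \<tau>2 z z"
proof -
  interpret T: rtree VT ET \<rho> by (fact T)
  interpret T2: rtree VT2 ET2 \<rho>2 by (fact T2)
  have ordi: "\<And>a b. a \<in> VT \<Longrightarrow> b \<in> VT \<Longrightarrow> (f a, f b) \<in> ET2\<^sup>* \<longleftrightarrow> (a, b) \<in> ET\<^sup>*" using ord by blast
  have aL: "a \<in> VT2 \<and> a \<noteq> z" if "a \<in> L" for a
  proof -
    have "a \<in> VT" using LV that by blast
    then have "f a \<in> f ` VT" by simp
    then have "a \<in> f ` VT" using fL that by simp
    then show ?thesis using fV zf by blast
  qed
  have lcaf: "lca VT2 ET2 (f a) (f b) = f (lca VT ET a b)" if "a \<in> L" "b \<in> L" for a b
  proof (rule lca_embed[OF T T2 fV ordi])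
    show "a \<in> VT" "b \<in> VT" using that LV by auto
  next
    fix w' assume w': "w' \<in> VT2" "w' \<notin> f ` VT" "(w', f a) \<in> ET2\<^sup>*" "(w', f b) \<in> ET2\<^sup>*"
    have "w' \<noteq> z"
    proof
      assume "w' = z"
      then have "f a = z" using T2.leaf_desc[OF cz] w'(3) by blast
      then show False using aL[OF that(1)] fL that(1) by auto
    qed
    then have "w' = \<rho>2" using w' V2 by blast
    moreover have "(\<rho>2, f \<rho>) \<in> ET2\<^sup>*" using T2.reach fV T.root_in by blast
    moreover have "(\<rho>, a) \<in> ET\<^sup>*" "(\<rho>, b) \<in> ET\<^sup>*" using T.reach that LV by auto
    ultimately show "\<exists>w''\<in>VT. (w'', a) \<in> ET\<^sup>* \<and> (w'', b) \<in> ET\<^sup>* \<and> (w', f w'') \<in> ET2\<^sup>*"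
      using T.root_in by blast
  qed
  have bm: "best_match VT2 ET2 L2 \<tau>2 (f a) (f b) \<longleftrightarrow> best_match VT ET L \<tau> a b"
    if "a \<in> L" "b \<in> L" for a b
  proof (rule bm_transfer[OF T T2 LV ordi])
    show "f ` L \<subseteq> L2" using L2 fL by auto
    show "\<And>a b. a \<in> L \<Longrightarrow> b \<in> L \<Longrightarrow> lca VT2 ET2 (f a) (f b) = f (lca VT ET a b)" by (fact lcaf)
    show "\<And>a. a \<in> L \<Longrightarrow> \<tau>2 (f a) = \<tau> a" using col fL by simp
    show "\<And>y. y \<in> L2 \<Longrightarrow> y \<notin> f ` L \<Longrightarrow> \<tau>2 y \<notin> \<tau> ` L"
    proof -
      fix y assume "y \<in> L2" "y \<notin> f ` L"
      then have "y = z" using L2 fL by (metis image_eqI insertE)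
      then show "\<tau>2 y \<notin> \<tau> ` L" using zcol by simp
    qed
  qed (use that in auto)
  show "reciprocal_best_match VT2 ET2 L2 \<tau>2 a b \<longleftrightarrow> reciprocal_best_match VT ET L \<tau> a b"
    if "a \<in> L" "b \<in> L" for a b
    using bm[of a b] bm[of b a] that fL unfolding reciprocal_best_match_def by simp
  have zV2: "z \<in> VT2" using e T2.edge_in by blast
  have lz: "T2.is_lca a z \<rho>2" "T2.is_lca z a \<rho>2" if "a \<in> L" for a
  proof -
    have common: "(w', \<rho>2) \<in> ET2\<^sup>*" if "w' \<in> VT2" "(w', z) \<in> ET2\<^sup>*" "(w', a) \<in> ET2\<^sup>*" for w'
    proof -
      have "w' \<noteq> z"
      proof
        assume "w' = z"
        then have "(z, a) \<in> ET2\<^sup>*" using that(3) by simp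
        then have "a = z" using T2.leaf_desc[OF cz] by blast
        then show False using aL[OF \<open>a \<in> L\<close>] by simp
      qed
      then show ?thesis using T2.anc_step e that by blast
    qed
    have r: "(\<rho>2, a) \<in> ET2\<^sup>*" "(\<rho>2, z) \<in> ET2\<^sup>*" using T2.reach aL[OF that] zV2 by auto
    have m: "(\<rho>2, w') \<in> ET2\<^sup>*" if "w' \<in> VT2" "(w', z) \<in> ET2\<^sup>*" "(w', a) \<in> ET2\<^sup>*" for w'
    proof -
      have "w' = \<rho>2" using common[OF that] T2.root_anc by blast
      then show ?thesis by simp
    qed
    show "T2.is_lca a z \<rho>2" unfolding T2.is_lca_def anc_le_def
      using common r T2.root_in by auto
    show "T2.is_lca z a \<rho>2" unfolding T2.is_lca_def anc_le_def
      using common r T2.root_in by auto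
  qed
  have lcaz: "lca VT2 ET2 a z = \<rho>2" "lca VT2 ET2 z a = \<rho>2" if "a \<in> L" for a
    using T2.lca_eq[OF lz(1)[OF that]] T2.lca_eq[OF lz(2)[OF that]] by simp_all
  have zcol': "\<tau>2 y \<noteq> \<tau>2 z" if "y \<in> L" for y
  proof -
    have "\<tau>2 y = \<tau> y" using col that by blast
    moreover have "\<tau> y \<in> \<tau> ` L" using that by simp
    ultimately show ?thesis using zcol by auto
  qed
  show "reciprocal_best_match VT2 ET2 L2 \<tau>2 a z \<and> reciprocal_best_match VT2 ET2 L2 \<tau>2 z a"
    if aL': "a \<in> L" for a
  proof -
    have "best_match VT2 ET2 L2 \<tau>2 a z"
      unfolding best_match_def anc_le_def
    proof (intro conjI ballI impI)
      show "a \<in> L2" "z \<in> L2" using L2 aL' by auto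
      show "\<tau>2 a \<noteq> \<tau>2 z" using zcol' aL' by simp
    next
      fix y' assume "y' \<in> L2" "\<tau>2 y' = \<tau>2 z"
      then have "y' = z" using L2 zcol' by blast
      then show "(lca VT2 ET2 a y', lca VT2 ET2 a z) \<in> ET2\<^sup>*" by simp
    qed
    moreover have "best_match VT2 ET2 L2 \<tau>2 z a"
      unfolding best_match_def anc_le_def
    proof (intro conjI ballI impI)
      show "a \<in> L2" "z \<in> L2" using L2 aL' by auto
      show "\<tau>2 z \<noteq> \<tau>2 a" using zcol' aL' by metis
    next
      fix y' assume y': "y' \<in> L2" "\<tau>2 y' = \<tau>2 a"
      then have "y' \<in> L" using L2 zcol'[OF aL'] by auto
      then show "(lca VT2 ET2 z y', lca VT2 ET2 z a) \<in> ET2\<^sup>*" using lcaz aL' by simp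
    qed
    ultimately show ?thesis unfolding reciprocal_best_match_def by simp
  qed
  show "\<not> reciprocal_best_match VT2 ET2 L2 \<tau>2 z z"
    unfolding reciprocal_best_match_def best_match_def by simp
qed

lemma bwd_tree:
  fixes VT' :: "('a + nat) set" and V :: "'a set"
  assumes P: "phylo_tree VT' ET' \<rho>' (Inl ` insert x V)" and xV: "x \<notin> V" and Vne: "V \<noteq> {}"
  shows "\<exists>VT ET. rtree VT ET \<rho>' \<and> phylo_tree VT ET \<rho>' (Inl ` V) \<and> VT \<subseteq> VT'
     \<and> (\<forall>a\<in>VT. \<forall>b\<in>VT. (a, b) \<in> ET'\<^sup>* \<longleftrightarrow> (a, b) \<in> ET\<^sup>*)
     \<and> (\<forall>a\<in>Inl ` V. \<forall>b\<in>Inl ` V. lca VT' ET' a b = lca VT ET a b)"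
proof -
  define z :: "'a + nat" where "z = Inl x"
  define L :: "('a + nat) set" where "L = Inl ` V"
  define L' where "L' = insert z L"
  have T': "rtree VT' ET' \<rho>'" using P unfolding phylo_tree_def rtree_def by blast
  interpret T': rtree VT' ET' \<rho>' by (fact T')
  have leavesL: "leaves VT' ET' = L'" using P unfolding phylo_tree_def L'_def L_def z_def by simp
  have deg: "\<And>v. v \<in> VT' \<Longrightarrow> v \<notin> L' \<Longrightarrow> v \<noteq> \<rho>' \<Longrightarrow> tdeg ET' \<rho>' v \<ge> 3"
    using P unfolding phylo_tree_def L'_def L_def z_def by simp
  have zL: "z \<notin> L" using xV unfolding z_def L_def by auto
  have LL: "L = L' - {z}" using zL L'_def by auto
  have zV: "z \<in> VT'" and cz: "children ET' z = {}" using leavesL L'_def unfolding leaves_def by auto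
  have LV: "L \<subseteq> VT'" using leavesL L'_def unfolding leaves_def by auto
  obtain u0 where u0: "u0 \<in> L" using Vne L_def by blast
  have u0z: "u0 \<noteq> z" using u0 zL by blast
  have zr: "z \<noteq> \<rho>'"
  proof
    assume "z = \<rho>'"
    then have "VT' = {\<rho>'}" using T'.root_leaf cz by simp
    then show False using u0 LV u0z \<open>z = \<rho>'\<close> by blast
  qed
  obtain p where pz: "(p, z) \<in> ET'" using T'.parent_ex zV zr by blast
  have pV: "p \<in> VT'" using pz T'.edge_in by blast
  have zcp: "z \<in> children ET' p" using pz unfolding children_def by simp
  have pL: "p \<notin> L'" using zcp leavesL unfolding leaves_def by auto
  have pz': "p \<noteq> z" using pL L'_def by blast
  have zch: "z \<notin> children ET' v" if "v \<noteq> p" for v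
    using that pz T'.parent_unique unfolding children_def by blast
  have notone: "children ET' p \<noteq> {z}"
  proof
    assume one: "children ET' p = {z}"
    show False
    proof (cases "p = \<rho>'")
      case True
      then have "VT' \<subseteq> {\<rho>', z}" using T'.root_one_child one cz by simp
      then show False using u0 LV u0z pL True L'_def by blast
    next
      case False
      then have "tdeg ET' \<rho>' p = 2" unfolding tdeg_def using one by simp
      then show False using deg pV pL False by fastforce
    qed
  qed
  have zr': "z \<noteq> \<rho>'" by (fact zr)
  define VT1 where "VT1 = VT' - {z}"
  define ET1 where "ET1 = {e \<in> ET'. snd e \<noteq> z}"
  have T1: "rtree VT1 ET1 \<rho>'" using remove_leaf(1)[OF T' zV zr cz] VT1_def ET1_def by simp
  have ord1: "\<And>a b. a \<in> VT1 \<Longrightarrow> b \<in> VT1 \<Longrightarrow> (a, b) \<in> ET1\<^sup>* \<longleftrightarrow> (a, b) \<in> ET'\<^sup>*"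
    using remove_leaf(2)[OF T' zV zr cz] VT1_def ET1_def by simp
  have ch1: "\<And>v. children ET1 v = children ET' v - {z}"
    using remove_leaf(3)[OF T' zV zr cz] ET1_def by simp
  have ch1v: "children ET1 v = children ET' v" if "v \<noteq> p" for v
    using ch1 zch[OF that] by simp
  have finch: "finite (children ET' v)" for v using T'.children_fin .
  have pV1: "p \<in> VT1" using pV pz' VT1_def by simp
  have LV1: "L \<subseteq> VT1" using LV zL VT1_def by auto
  have zanc: "(z, a) \<in> ET'\<^sup>* \<Longrightarrow> a \<in> L \<Longrightarrow> False" for a
    using T'.leaf_desc[OF cz] zL by blast
  show ?thesis
  proof (cases "p = \<rho>' \<or> card (children ET' p) \<ge> 3")
    case True
    have lv1: "leaves VT1 ET1 = L"
    proof (rule set_eqI)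
      fix v show "v \<in> leaves VT1 ET1 \<longleftrightarrow> v \<in> L"
      proof (cases "v = p")
        case True
        have "children ET1 p \<noteq> {}" using ch1 notone zcp by auto
        then show ?thesis using True pL L'_def unfolding leaves_def by auto
      next
        case False
        then show ?thesis using ch1v[OF False] leavesL LL unfolding leaves_def VT1_def by auto
      qed
    qed
    have ph: "phylo_tree VT1 ET1 \<rho>' (Inl ` V)"
      unfolding phylo_tree_def L_def[symmetric]
    proof (intro conjI ballI impI)
      show "rooted_tree VT1 ET1 \<rho>'" using T1 unfolding rtree_def .
      show "leaves VT1 ET1 = L" by (fact lv1)
    next
      fix v assume v: "v \<in> VT1" "v \<notin> L \<and> v \<noteq> \<rho>'"
      then have vV: "v \<in> VT'" "v \<notin> L'" "v \<noteq> \<rho>'" using VT1_def L'_def by auto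
      show "3 \<le> tdeg ET1 \<rho>' v"
      proof (cases "v = p")
        case False
        then show ?thesis using deg[OF vV] ch1v[OF False] unfolding tdeg_def by simp
      next
        case vp: True
        then have "card (children ET' p) \<ge> 3" using True vV by blast
        moreover have "card (children ET1 p) = card (children ET' p) - 1"
          using ch1 zcp finch by simp
        ultimately show ?thesis unfolding tdeg_def using vp vV by simp
      qed
    qed
    have ordi: "\<And>a b. a \<in> VT1 \<Longrightarrow> b \<in> VT1 \<Longrightarrow> (id a, id b) \<in> ET'\<^sup>* \<longleftrightarrow> (a, b) \<in> ET1\<^sup>*"
      using ord1 by simp
    have lcaeq: "lca VT' ET' a b = lca VT1 ET1 a b" if "a \<in> L" "b \<in> L" for a b
    proof -
      have "lca VT' ET' (id a) (id b) = id (lca VT1 ET1 a b)"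
      proof (rule lca_embed[OF T1 T' _ ordi])
        show "id ` VT1 \<subseteq> VT'" using VT1_def by auto
        show "a \<in> VT1" "b \<in> VT1" using that LV1 by auto
      next
        fix w' assume w': "w' \<in> VT'" "w' \<notin> id ` VT1" "(w', id a) \<in> ET'\<^sup>*" "(w', id b) \<in> ET'\<^sup>*"
        then have "w' = z" using VT1_def by auto
        then show "\<exists>w''\<in>VT1. (w'', a) \<in> ET1\<^sup>* \<and> (w'', b) \<in> ET1\<^sup>* \<and> (w', id w'') \<in> ET'\<^sup>*"
          using zanc[of a] w'(3) that by auto
      qed
      then show ?thesis by simp
    qed
    show ?thesis
      apply (rule exI[of _ VT1], rule exI[of _ ET1])
      using T1 ph ord1 lcaeq unfolding VT1_def L_def by auto
  next
    case False
    then have pr: "p \<noteq> \<rho>'" and c3: "card (children ET' p) < 3" by auto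
    have "card (children ET' p) \<ge> 2" using deg[OF pV pL pr] pr unfolding tdeg_def by simp
    then have c2: "card (children ET' p) = 2" using c3 by simp
    have "card (children ET' p - {z}) = 1" using c2 zcp finch by simp
    then obtain c where cc: "children ET' p - {z} = {c}" using card_1_singletonE by blast
    then have ch1p: "children ET1 p = {c}" using ch1 by simp
    have chp: "children ET' p = {z, c}" using cc zcp by auto
    obtain q where qp': "(q, p) \<in> ET'" using T'.parent_ex pV pr by blast
    have qz: "snd (q, p) \<noteq> z" using pz' by simp
    have qp: "(q, p) \<in> ET1" using qp' pz' ET1_def by simp
    have pr1: "p \<noteq> \<rho>'" by (fact pr)
    note C = contract[OF T1 pV1 pr1 ch1p qp]
    define VT2 where "VT2 = VT1 - {p}"
    define ET2 where "ET2 = {e \<in> ET1. fst e \<noteq> p \<and> snd e \<noteq> p} \<union> {(q, c)}"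
    have T2: "rtree VT2 ET2 \<rho>'" using C(1) VT2_def ET2_def by simp
    have ord2: "\<And>a b. a \<in> VT2 \<Longrightarrow> b \<in> VT2 \<Longrightarrow> (a, b) \<in> ET2\<^sup>* \<longleftrightarrow> (a, b) \<in> ET1\<^sup>*"
      using C(2) VT2_def ET2_def by simp
    have ch2: "\<And>v. v \<noteq> p \<Longrightarrow> children ET2 v = (if v = q then insert c (children ET1 q - {p}) else children ET1 v)"
      using C(3) ET2_def by simp
    have qnp: "q \<noteq> p" and cnp: "c \<noteq> p" and qV1: "q \<in> VT1" and cV1: "c \<in> VT1" and cq: "c \<notin> children ET1 q"
      using C(4-8) by auto
    have pq: "p \<in> children ET1 q" using qp unfolding children_def by simp
    have cz: "c \<noteq> z" using cV1 VT1_def by blast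
    have ord: "\<And>a b. a \<in> VT2 \<Longrightarrow> b \<in> VT2 \<Longrightarrow> (a, b) \<in> ET'\<^sup>* \<longleftrightarrow> (a, b) \<in> ET2\<^sup>*"
      using ord1 ord2 VT2_def by auto
    have finch1: "finite (children ET1 v)" for v using rtree.children_fin[OF T1] .
    have chq: "card (children ET2 q) = card (children ET' q)"
    proof -
      have "card (children ET2 q) = card (insert c (children ET1 q - {p}))" using ch2 qnp by simp
      also have "\<dots> = card (children ET1 q)"
      proof -
        have "card (children ET1 q) > 0" using pq finch1 card_gt_0_iff by blast
        then show ?thesis using cq pq finch1 by (simp add: card_insert_disjoint)
      qed
      also have "\<dots> = card (children ET' q)" using ch1v qnp by simp
      finally show ?thesis .
    qed
    have chv: "children ET2 v = children ET' v" if "v \<noteq> p" "v \<noteq> q" for v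
      using ch2[OF that(1)] that ch1v by simp
    have qL: "q \<notin> L'" using pq ch1 leavesL qV1 VT1_def unfolding leaves_def by auto
    have lv2: "leaves VT2 ET2 = L"
    proof (rule set_eqI)
      fix v show "v \<in> leaves VT2 ET2 \<longleftrightarrow> v \<in> L"
      proof (cases "v = q")
        case True
        then show ?thesis using ch2 qnp qL L'_def unfolding leaves_def by auto
      next
        case False
        show ?thesis
        proof (cases "v = p")
          case True then show ?thesis using pL L'_def unfolding leaves_def VT2_def by auto
        next
          case vp: False
          then show ?thesis using chv[OF vp False] leavesL LL unfolding leaves_def VT2_def VT1_def by auto
        qed
      qed
    qed
    have ph: "phylo_tree VT2 ET2 \<rho>' (Inl ` V)"
      unfolding phylo_tree_def L_def[symmetric]
    proof (intro conjI ballI impI)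
      show "rooted_tree VT2 ET2 \<rho>'" using T2 unfolding rtree_def .
      show "leaves VT2 ET2 = L" by (fact lv2)
    next
      fix v assume v: "v \<in> VT2" "v \<notin> L \<and> v \<noteq> \<rho>'"
      then have vV: "v \<in> VT'" "v \<notin> L'" "v \<noteq> \<rho>'" "v \<noteq> p" using VT2_def VT1_def L'_def by auto
      show "3 \<le> tdeg ET2 \<rho>' v"
      proof (cases "v = q")
        case False
        then show ?thesis using deg[OF vV(1-3)] chv[OF vV(4) False] unfolding tdeg_def by simp
      next
        case True
        then show ?thesis using deg[OF vV(1-3)] chq unfolding tdeg_def by simp
      qed
    qed
    have ordi: "\<And>a b. a \<in> VT2 \<Longrightarrow> b \<in> VT2 \<Longrightarrow> (id a, id b) \<in> ET'\<^sup>* \<longleftrightarrow> (a, b) \<in> ET2\<^sup>*"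
      using ord by simp
    have VT2': "VT2 = VT' - {z, p}" unfolding VT2_def VT1_def by auto
    have cV2: "c \<in> VT2" using cV1 cnp VT2_def by simp
    have LV2: "L \<subseteq> VT2" using LV1 pL L'_def VT2_def by auto
    have pc: "(p, c) \<in> ET'" using chp unfolding children_def by auto
    have lcaeq: "lca VT' ET' a b = lca VT2 ET2 a b" if "a \<in> L" "b \<in> L" for a b
    proof -
      have "lca VT' ET' (id a) (id b) = id (lca VT2 ET2 a b)"
      proof (rule lca_embed[OF T2 T' _ ordi])
        show "id ` VT2 \<subseteq> VT'" using VT2' by auto
        show "a \<in> VT2" "b \<in> VT2" using that LV2 by auto
      next
        fix w' assume w': "w' \<in> VT'" "w' \<notin> id ` VT2" "(w', id a) \<in> ET'\<^sup>*" "(w', id b) \<in> ET'\<^sup>*"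
        then have wzp: "w' = z \<or> w' = p" using VT2' by auto
        have wz: "w' \<noteq> z" using zanc w'(3) that by auto
        then have wp: "w' = p" using wzp by simp
        have below: "(c, y) \<in> ET'\<^sup>*" if yh: "y \<in> L" "(p, y) \<in> ET'\<^sup>*" for y
        proof -
          have "y \<noteq> p" using yh pL L'_def by auto
          then obtain d where d: "d \<in> children ET' p" "(d, y) \<in> ET'\<^sup>*" using T'.desc_child yh(2) by blast
          have "d \<noteq> z" using d(2) zanc yh(1) by blast
          then show ?thesis using d chp by auto
        qed
        have "(c, a) \<in> ET'\<^sup>*" "(c, b) \<in> ET'\<^sup>*" using below w'(3,4) wp that by auto
        then have "(c, a) \<in> ET2\<^sup>*" "(c, b) \<in> ET2\<^sup>*" using ord cV2 LV2 that by auto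
        moreover have "(w', id c) \<in> ET'\<^sup>*" using pc wp by simp
        ultimately show "\<exists>w''\<in>VT2. (w'', a) \<in> ET2\<^sup>* \<and> (w'', b) \<in> ET2\<^sup>* \<and> (w', id w'') \<in> ET'\<^sup>*"
          using cV2 by blast
      qed
      then show ?thesis by simp
    qed
    show ?thesis
      apply (rule exI[of _ VT2], rule exI[of _ ET2])
      using T2 ph ord lcaeq VT2' unfolding L_def by auto
  qed
qed

theorem mainTheorem4:
  fixes V :: "'a set" and E :: "('a \<times> 'a) set" and \<sigma> \<sigma>' :: "'a \<Rightarrow> 'c"
    and x :: 'a and n :: nat
  assumes "n > 1"
    and "simple_graph V E"
    and "x \<notin> V"
    and "\<forall>v\<in>V. \<sigma>' v = \<sigma> v"
    and "\<forall>v\<in>V. \<sigma>' x \<noteq> \<sigma> v"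
  shows "n_RBMG (n - 1) V E \<sigma> \<longleftrightarrow>
         n_RBMG n (insert x V) (E \<union> {(x, v) | v. v \<in> V} \<union> {(v, x) | v. v \<in> V}) \<sigma>'"
proof -
  note n1 = assms(1) and SG = assms(2) and xV = assms(3) and sig = assms(4) and sigx = assms(5)
  define E' where "E' = E \<union> {(x, v) | v. v \<in> V} \<union> {(v, x) | v. v \<in> V}"
  define V' where "V' = insert x V"
  define \<tau> :: "'a + nat \<Rightarrow> 'c" where "\<tau> = case_sum \<sigma> (\<lambda>_. undefined)"
  define \<tau>' :: "'a + nat \<Rightarrow> 'c" where "\<tau>' = case_sum \<sigma>' (\<lambda>_. undefined)"
  define L :: "('a + nat) set" where "L = Inl ` V"
  define z :: "'a + nat" where "z = Inl x"
  have finV: "finite V" and EV: "E \<subseteq> V \<times> V" and symE: "sym E" and irrE: "irrefl E"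
    using SG unfolding simple_graph_def by auto
  have img: "\<sigma>' ` V' = insert (\<sigma>' x) (\<sigma> ` V)" unfolding V'_def using sig by auto
  have sxn: "\<sigma>' x \<notin> \<sigma> ` V" using sigx by auto
  have card: "card (\<sigma>' ` V') = card (\<sigma> ` V) + 1" using img sxn finV by simp
  have SG': "simple_graph V' E'"
    unfolding simple_graph_def V'_def E'_def
  proof (intro conjI)
    show "finite (insert x V)" using finV by simp
    show "E \<union> {(x, v) |v. v \<in> V} \<union> {(v, x) |v. v \<in> V} \<subseteq> insert x V \<times> insert x V" using EV by auto
    show "sym (E \<union> {(x, v) |v. v \<in> V} \<union> {(v, x) |v. v \<in> V})"
      using symE unfolding sym_def by blast
    show "irrefl (E \<union> {(x, v) |v. v \<in> V} \<union> {(v, x) |v. v \<in> V})"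
      using irrE xV unfolding irrefl_def by blast
  qed
  have EE': "(u, v) \<in> E' \<longleftrightarrow> (u, v) \<in> E" if "u \<in> V" "v \<in> V" for u v
    using that xV unfolding E'_def by auto
  have Ex: "(u, x) \<in> E'" "(x, u) \<in> E'" if "u \<in> V" for u using that unfolding E'_def by auto
  have Exx: "(x, x) \<notin> E'" using irrE xV EV unfolding E'_def irrefl_def by auto
  have PC: "properly_colored V' E' \<sigma>' \<longleftrightarrow> properly_colored V E \<sigma>"
  proof
    assume pc: "properly_colored V' E' \<sigma>'"
    show "properly_colored V E \<sigma>" unfolding properly_colored_def
    proof (intro allI impI)
      fix u v assume uv: "(u, v) \<in> E"
      then have "u \<in> V" "v \<in> V" using EV by auto
      moreover have "(u, v) \<in> E'" using uv unfolding E'_def by simp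
      ultimately show "\<sigma> u \<noteq> \<sigma> v" using pc sig unfolding properly_colored_def by metis
    qed
  next
    assume pc: "properly_colored V E \<sigma>"
    show "properly_colored V' E' \<sigma>'" unfolding properly_colored_def
    proof (intro allI impI)
      fix u v assume uv: "(u, v) \<in> E'"
      show "\<sigma>' u \<noteq> \<sigma>' v"
      proof (cases "(u, v) \<in> E")
        case True
        then have "u \<in> V" "v \<in> V" using EV by auto
        then show ?thesis using pc True sig unfolding properly_colored_def by auto
      next
        case False
        then have "(u = x \<and> v \<in> V) \<or> (v = x \<and> u \<in> V)" using uv unfolding E'_def by auto
        then show ?thesis
        proof (elim disjE conjE)
          assume "u = x" "v \<in> V"
          then show ?thesis using sigx sig by simp
        next
          assume a: "v = x" "u \<in> V"
          then have "\<sigma>' u = \<sigma> u" "\<sigma>' x \<noteq> \<sigma> u" using sigx sig by auto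
          then show ?thesis using a by simp
        qed
      qed
    qed
  qed
  have Lz: "Inl ` V' = insert z L" unfolding V'_def z_def L_def by simp
  have col: "\<forall>a\<in>L. \<tau>' a = \<tau> a" unfolding L_def \<tau>_def \<tau>'_def using sig by auto
  have zcol: "\<tau>' z \<notin> \<tau> ` L" unfolding L_def \<tau>_def \<tau>'_def z_def using sxn by auto
  have zL: "z \<notin> L" unfolding z_def L_def using xV by auto
  show ?thesis
    unfolding E'_def[symmetric] V'_def[symmetric]
  proof
    assume H: "n_RBMG (n - 1) V E \<sigma>"
    then have cardV: "card (\<sigma> ` V) = n - 1" and HR: "RBMG V E \<sigma>"
      unfolding n_RBMG_def by simp_all
    then have pc: "properly_colored V E \<sigma>" unfolding RBMG_def by blast
    obtain VT :: "('a + nat) set" and ET \<rho> where P: "phylo_tree VT ET \<rho> L"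
      and R: "\<forall>u\<in>V. \<forall>v\<in>V. (u, v) \<in> E \<longleftrightarrow> reciprocal_best_match VT ET L \<tau> (Inl u) (Inl v)"
      using HR unfolding RBMG_def L_def \<tau>_def by blast
    obtain VT2 :: "('a + nat) set" and ET2 \<rho>2 f where C: "rtree VT2 ET2 \<rho>2 \<and> phylo_tree VT2 ET2 \<rho>2 (Inl ` insert x V)
     \<and> f ` VT \<subseteq> VT2 \<and> VT2 \<subseteq> insert (Inl x) (insert \<rho>2 (f ` VT)) \<and> Inl x \<notin> f ` VT
     \<and> (\<forall>a\<in>VT. \<forall>b\<in>VT. (f a, f b) \<in> ET2\<^sup>* \<longleftrightarrow> (a, b) \<in> ET\<^sup>*)
     \<and> (\<rho>2, Inl x) \<in> ET2 \<and> (\<forall>a\<in>Inl ` V. f a = a)"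
      using fwd_tree[OF P[unfolded L_def] xV] by (elim exE) (rule that)
    note C' = C[folded V'_def, folded L_def, folded z_def]
    have T2: "rtree VT2 ET2 \<rho>2" and P2: "phylo_tree VT2 ET2 \<rho>2 (Inl ` V')"
      and fV: "f ` VT \<subseteq> VT2" and V2: "VT2 \<subseteq> insert z (insert \<rho>2 (f ` VT))" and zf: "z \<notin> f ` VT"
      and ord: "\<forall>a\<in>VT. \<forall>b\<in>VT. (f a, f b) \<in> ET2\<^sup>* \<longleftrightarrow> (a, b) \<in> ET\<^sup>*"
      and e: "(\<rho>2, z) \<in> ET2" and fL: "\<forall>a\<in>L. f a = a"
      using C' by blast+
    have T: "rtree VT ET \<rho>" using P unfolding phylo_tree_def rtree_def by blast
    have LV: "L \<subseteq> VT" using P unfolding phylo_tree_def leaves_def by blast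
    have lv2: "leaves VT2 ET2 = insert z L" using P2 Lz unfolding phylo_tree_def by simp
    have cz: "children ET2 z = {}" using lv2 unfolding leaves_def by blast
    note F = fwd_rbm[OF T LV T2 fV V2 zf ord e Lz fL cz col zcol]
    have RBM: "RBMG V' E' \<sigma>'"
      unfolding RBMG_def
    proof (intro conjI)
      show "simple_graph V' E'" by (fact SG')
      show "properly_colored V' E' \<sigma>'" using PC pc by simp
      show "\<exists>(VT :: ('a + nat) set) ET \<rho>. phylo_tree VT ET \<rho> (Inl ` V') \<and>
        (\<forall>u\<in>V'. \<forall>v\<in>V'. (u, v) \<in> E' \<longleftrightarrow>
            reciprocal_best_match VT ET (Inl ` V') (case_sum \<sigma>' (\<lambda>_. undefined)) (Inl u) (Inl v))"
      proof (rule exI[of _ VT2], rule exI[of _ ET2], rule exI[of _ \<rho>2], intro conjI ballI)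
        show "phylo_tree VT2 ET2 \<rho>2 (Inl ` V')" by (fact P2)
      next
        fix u v assume uv: "u \<in> V'" "v \<in> V'"
        show "(u, v) \<in> E' \<longleftrightarrow> reciprocal_best_match VT2 ET2 (Inl ` V') (case_sum \<sigma>' (\<lambda>_. undefined)) (Inl u) (Inl v)"
          unfolding \<tau>'_def[symmetric]
        proof (cases "u = x")
          case ux: True
          show "(u, v) \<in> E' \<longleftrightarrow> reciprocal_best_match VT2 ET2 (Inl ` V') \<tau>' (Inl u) (Inl v)"
          proof (cases "v = x")
            case True then show ?thesis using ux Exx F(3) z_def by simp
          next
            case False
            then have "v \<in> V" using uv V'_def by simp
            then show ?thesis using ux Ex F(2)[of "Inl v"] z_def L_def by simp
          qed
        next
          case ux: False
          then have uV: "u \<in> V" using uv V'_def by simp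
          show "(u, v) \<in> E' \<longleftrightarrow> reciprocal_best_match VT2 ET2 (Inl ` V') \<tau>' (Inl u) (Inl v)"
          proof (cases "v = x")
            case True then show ?thesis using uV Ex F(2)[of "Inl u"] z_def L_def by simp
          next
            case False
            then have "v \<in> V" using uv V'_def by simp
            then show ?thesis using uV EE' R F(1)[of "Inl u" "Inl v"] L_def by simp
          qed
        qed
      qed
    qed
    show "n_RBMG n V' E' \<sigma>'" unfolding n_RBMG_def using RBM card cardV n1 by simp
  next
    assume H: "n_RBMG n V' E' \<sigma>'"
    then have cardV': "card (\<sigma>' ` V') = n" and HR: "RBMG V' E' \<sigma>'"
      unfolding n_RBMG_def by simp_all
    then have pc': "properly_colored V' E' \<sigma>'" unfolding RBMG_def by blast
    have cardV: "card (\<sigma> ` V) = n - 1" using cardV' card by simp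
    then have Vne: "V \<noteq> {}" using n1 by auto
    obtain VT' :: "('a + nat) set" and ET' \<rho>' where P': "phylo_tree VT' ET' \<rho>' (Inl ` V')"
      and R': "\<forall>u\<in>V'. \<forall>v\<in>V'. (u, v) \<in> E' \<longleftrightarrow> reciprocal_best_match VT' ET' (Inl ` V') \<tau>' (Inl u) (Inl v)"
      using HR unfolding RBMG_def \<tau>'_def by blast
    obtain VT ET where T: "rtree VT ET \<rho>'" and P: "phylo_tree VT ET \<rho>' L" and VV: "VT \<subseteq> VT'"
      and ord: "\<forall>a\<in>VT. \<forall>b\<in>VT. (a, b) \<in> ET'\<^sup>* \<longleftrightarrow> (a, b) \<in> ET\<^sup>*"
      and lcaeq: "\<forall>a\<in>L. \<forall>b\<in>L. lca VT' ET' a b = lca VT ET a b"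
      using bwd_tree[OF P'[unfolded V'_def] xV Vne] unfolding L_def by blast
    have T': "rtree VT' ET' \<rho>'" using P' unfolding phylo_tree_def rtree_def by blast
    have LV: "L \<subseteq> VT" using P unfolding phylo_tree_def leaves_def by blast
    have bm: "best_match VT' ET' (Inl ` V') \<tau>' (id a) (id b) \<longleftrightarrow> best_match VT ET L \<tau> a b"
      if "a \<in> L" "b \<in> L" for a b
    proof (rule bm_transfer[OF T T' LV])
      show "\<And>a b. a \<in> VT \<Longrightarrow> b \<in> VT \<Longrightarrow> (id a, id b) \<in> ET'\<^sup>* \<longleftrightarrow> (a, b) \<in> ET\<^sup>*" using ord by simp
      show "id ` L \<subseteq> Inl ` V'" using Lz by auto
      show "\<And>a b. a \<in> L \<Longrightarrow> b \<in> L \<Longrightarrow> lca VT' ET' (id a) (id b) = id (lca VT ET a b)" using lcaeq by simp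
      show "\<And>a. a \<in> L \<Longrightarrow> \<tau>' (id a) = \<tau> a" using col by simp
      show "\<And>y. y \<in> Inl ` V' \<Longrightarrow> y \<notin> id ` L \<Longrightarrow> \<tau>' y \<notin> \<tau> ` L" using Lz zcol by auto
    qed (use that in auto)
    have RBM: "RBMG V E \<sigma>"
      unfolding RBMG_def
    proof (intro conjI)
      show "simple_graph V E" by (fact SG)
      show "properly_colored V E \<sigma>" using PC pc' by simp
      show "\<exists>(VT :: ('a + nat) set) ET \<rho>. phylo_tree VT ET \<rho> (Inl ` V) \<and>
        (\<forall>u\<in>V. \<forall>v\<in>V. (u, v) \<in> E \<longleftrightarrow>
            reciprocal_best_match VT ET (Inl ` V) (case_sum \<sigma> (\<lambda>_. undefined)) (Inl u) (Inl v))"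
      proof (rule exI[of _ VT], rule exI[of _ ET], rule exI[of _ \<rho>'], intro conjI ballI)
        show "phylo_tree VT ET \<rho>' (Inl ` V)" using P L_def by simp
      next
        fix u v assume uv: "u \<in> V" "v \<in> V"
        then have "Inl u \<in> L" "Inl v \<in> L" using L_def by auto
        then show "(u, v) \<in> E \<longleftrightarrow> reciprocal_best_match VT ET (Inl ` V) (case_sum \<sigma> (\<lambda>_. undefined)) (Inl u) (Inl v)"
          using bm[of "Inl u" "Inl v"] bm[of "Inl v" "Inl u"] R' EE'[OF uv] uv
          unfolding reciprocal_best_match_def \<tau>_def[symmetric] L_def[symmetric] V'_def by simp
      qed
    qed
    show "n_RBMG (n - 1) V E \<sigma>" unfolding n_RBMG_def using RBM cardV by simp
  qed
qed

end
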